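(* Let $g\in\mathrm{O}(n)$ and let $1\le m<p\le n$. Write $g=\begin{pmatrix}P&Q\\ R&T\end{pmatrix}$ with blocks of sizes $(m+(n-m))\times(m+(n-m))$, assume $1+P$ is invertible, and set $\Upsilon^m(g)=T-R(1+P)^{-1}Q$. For a matrix $A$ let $[A]_k$ denote its upper left $k\times k$ corner. Then $$\det\big(1+[g]_p\big)=\det\big(1+[g]_m\big)\,\det\big(1+[\Upsilon^m(g)]_{p-m}\big).$$ *)

theory Defs
  imports "Jordan_Normal_Form.Gauss_Jordan_Elimination" "Jordan_Normal_Form.Determinant"
begin

definition orth_group :: "nat \<Rightarrow> real mat set" where
  "orth_group n = {g \<in> carrier_mat n n. transpose_mat g * g = 1\<^sub>m n}"

definition corner :: "nat \<Rightarrow> 'a mat \<Rightarrow> 'a mat" where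
  "corner k A = mat k k (\<lambda>(i,j). A $$ (i,j))"

definition upsilon :: "nat \<Rightarrow> real mat \<Rightarrow> real mat" where
  "upsilon m g = (case split_block g m m of (P, Q, R, T) \<Rightarrow>
      T - R * the (mat_inverse (1\<^sub>m m + P)) * Q)"

end

theory Submission
  imports Defs
begin

lemma schur_det:
  fixes A :: "real mat"
  assumes A: "A \<in> carrier_mat m m" and Ai: "Ai \<in> carrier_mat m m" and AAi: "Ai * A = 1\<^sub>m m"
    and B: "B \<in> carrier_mat m k" and C: "C \<in> carrier_mat k m" and D: "D \<in> carrier_mat k k"
  shows "det (four_block_mat A B C D) = det A * det (D - C * Ai * B)"
proof -
  let ?S = "D - C * Ai * B"
  have S: "?S \<in> carrier_mat k k" using B C D Ai by auto
  have CAi: "C * Ai \<in> carrier_mat k m" using C Ai by auto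
  have "four_block_mat (1\<^sub>m m) (0\<^sub>m m k) (C * Ai) (1\<^sub>m k) * four_block_mat A B (0\<^sub>m k m) ?S
     = four_block_mat (1\<^sub>m m * A + 0\<^sub>m m k * 0\<^sub>m k m) (1\<^sub>m m * B + 0\<^sub>m m k * ?S)
        (C * Ai * A + 1\<^sub>m k * 0\<^sub>m k m) (C * Ai * B + 1\<^sub>m k * ?S)"
    by (rule mult_four_block_mat[OF _ _ CAi _ A B _ S], auto)
  also have "\<dots> = four_block_mat A B C D"
  proof -
    have "C * Ai * A = C" using C Ai A AAi by (simp add: assoc_mult_mat[OF C Ai A])
    moreover have "C * Ai * B + ?S = D"
      by (rule eq_matI, insert B C D Ai, auto)
    ultimately show ?thesis using A B C D S by simp
  qed
  finally have eq: "four_block_mat A B C D = four_block_mat (1\<^sub>m m) (0\<^sub>m m k) (C * Ai) (1\<^sub>m k) * four_block_mat A B (0\<^sub>m k m) ?S" by simp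
  have d1: "det (four_block_mat (1\<^sub>m m) (0\<^sub>m m k) (C * Ai) (1\<^sub>m k)) = 1"
    by (subst det_four_block_mat_upper_right_zero[OF _ refl CAi], auto)
  have d2: "det (four_block_mat A B (0\<^sub>m k m) ?S) = det A * det ?S"
    by (rule det_four_block_mat_lower_left_zero[OF A B refl S])
  show ?thesis unfolding eq
    by (subst det_mult[of _ "m+k"], insert A B S CAi, auto simp: d1 d2)
qed

lemma sub_mult:
  fixes X :: "real mat"
  assumes X: "X \<in> carrier_mat a c" and Y: "Y \<in> carrier_mat c b" and "a' \<le> a" "b' \<le> b"
  shows "mat a' b' (\<lambda>(i,j). (X*Y)$$(i,j)) = mat a' c (\<lambda>(i,j). X$$(i,j)) * mat c b' (\<lambda>(i,j). Y$$(i,j))"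
  by (rule eq_matI, insert assms, auto simp: scalar_prod_def)

lemma inv_exists:
  fixes A :: "real mat"
  assumes A: "A \<in> carrier_mat m m" and inv: "invertible_mat A"
  shows "\<exists>Ai. mat_inverse A = Some Ai \<and> Ai \<in> carrier_mat m m \<and> Ai * A = 1\<^sub>m m"
proof -
  from inv obtain B where AB: "A * B = 1\<^sub>m m" and BA: "B * A = 1\<^sub>m (dim_row B)"
    using A unfolding invertible_mat_def inverts_mat_def by auto
  have "dim_col B = m" using arg_cong[OF AB, of dim_col] by simp
  moreover have "dim_row B = m" using arg_cong[OF BA, of dim_col] A by simp
  ultimately have B: "B \<in> carrier_mat m m" by auto
  have "det A * det B = 1" using det_mult[OF A B] AB by simp
  hence "det A \<noteq> 0" by auto
  from det_non_zero_imp_unit[OF A this, of "()"]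
  have "A \<in> Units (ring_mat TYPE(real) m ())" .
  hence "mat_inverse A \<noteq> None" using mat_inverse(1)[OF A, of "()"] by blast
  then obtain Ai where "mat_inverse A = Some Ai" by auto
  with mat_inverse(2)[OF A this] show ?thesis by auto
qed

theorem proposition2p4:
  fixes n m p :: nat and g :: "real mat"
  assumes "g \<in> orth_group n"
    and "1 \<le> m" and "m < p" and "p \<le> n"
    and "invertible_mat (1\<^sub>m m + corner m g)"
  shows "det (1\<^sub>m p + corner p g)
         = det (1\<^sub>m m + corner m g) * det (1\<^sub>m (p - m) + corner (p - m) (upsilon m g))"
proof -
  define k where "k = p - m"
  have pk: "p = m + k" using assms k_def by auto
  have g: "g \<in> carrier_mat n n" using assms(1) unfolding orth_group_def by auto
  obtain P Q R T where sb: "split_block g m m = (P,Q,R,T)" by (metis prod_cases4)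
  have dims: "dim_row g = m + (n - m)" "dim_col g = m + (n - m)" using g assms by auto
  note cs = split_block[OF sb dims]
  have Pdef: "P = corner m g" using sb unfolding split_block_def Let_def corner_def
    by (auto simp: case_prod_beta)
  have Qdef: "Q = mat m (n - m) (\<lambda>(i,j). g $$ (i, j + m))"
   and Rdef: "R = mat (n - m) m (\<lambda>(i,j). g $$ (i + m, j))"
   and Tdef: "T = mat (n - m) (n - m) (\<lambda>(i,j). g $$ (i + m, j + m))"
    using sb g unfolding split_block_def Let_def by auto
  define A where "A = 1\<^sub>m m + P"
  have A: "A \<in> carrier_mat m m" using cs unfolding A_def by auto
  obtain Ai where Ai: "mat_inverse A = Some Ai" "Ai \<in> carrier_mat m m" "Ai * A = 1\<^sub>m m"
    using inv_exists[OF A] assms(5) unfolding A_def Pdef by blast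
  have ups: "upsilon m g = T - R * Ai * Q"
    unfolding upsilon_def sb using Ai(1) unfolding A_def by simp
  define B0 where "B0 = mat m k (\<lambda>(i,j). Q $$ (i,j))"
  define C0 where "C0 = mat k m (\<lambda>(i,j). R $$ (i,j))"
  define D0 where "D0 = mat k k (\<lambda>(i,j). T $$ (i,j))"
  have B0: "B0 \<in> carrier_mat m k" and C0: "C0 \<in> carrier_mat k m" and D0: "D0 \<in> carrier_mat k k"
    unfolding B0_def C0_def D0_def by auto
  have kn: "k \<le> n - m" using assms pk by auto
  have RAi: "R * Ai \<in> carrier_mat (n - m) m" using cs Ai by auto
  have e1: "mat k k (\<lambda>(i,j). (R * Ai * Q) $$ (i,j)) = mat k m (\<lambda>(i,j). (R * Ai) $$ (i,j)) * B0"
    unfolding B0_def by (rule sub_mult[OF RAi cs(2) kn kn])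
  have e2: "mat k m (\<lambda>(i,j). (R * Ai) $$ (i,j)) = C0 * mat m m (\<lambda>(i,j). Ai $$ (i,j))"
    unfolding C0_def by (rule sub_mult[OF cs(3) Ai(2) kn order_refl])
  have e3: "mat m m (\<lambda>(i,j). Ai $$ (i,j)) = Ai" using Ai(2) by (intro eq_matI, auto)
  have cu: "corner k (upsilon m g) = D0 - C0 * Ai * B0"
  proof -
    have "corner k (upsilon m g) = D0 - mat k k (\<lambda>(i,j). (R * Ai * Q) $$ (i,j))"
      unfolding ups corner_def D0_def
      by (rule eq_matI, insert cs Ai kn, auto)
    thus ?thesis unfolding e1 e2 e3 .
  qed
  have four: "1\<^sub>m p + corner p g = four_block_mat A B0 C0 (1\<^sub>m k + D0)"
    unfolding pk A_def Pdef B0_def C0_def D0_def Qdef Rdef Tdef corner_def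
    by (rule eq_matI, insert kn, auto)
  have "det (1\<^sub>m p + corner p g) = det A * det ((1\<^sub>m k + D0) - C0 * Ai * B0)"
    unfolding four by (rule schur_det[OF A Ai(2) Ai(3) B0 C0], insert D0, auto)
  also have "(1\<^sub>m k + D0) - C0 * Ai * B0 = 1\<^sub>m k + (D0 - C0 * Ai * B0)"
    by (rule eq_matI, insert B0 C0 D0 Ai, auto)
  finally show ?thesis unfolding cu[symmetric] k_def[symmetric] A_def Pdef .
qed

end
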